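(* Let $m(\omega)$ be a positive-integer-valued random variable, and let $j_\omega=\min\{n\in\mathbb N: m(\theta^{-n}\omega)\le n\}$. Then for every integer $k\ge0$, $\mathbb P(j_\omega>k)\le\mathbb P(m(\omega)>k)$.
   Context: $(\Omega,\mathcal F,\mathbb P,\theta)$ is the shift system of a stationary sequence indexed by $\mathbb Z$; in particular $\theta$ is invertible and preserves $\mathbb P$. ($j_\omega$ is a.s. finite; $\{j_\omega>k\}$ is understood with $j_\omega=\infty$ if no such $n$ exists.) *)

theory Defs
  imports "HOL-Probability.Probability"
begin

(* j_omega = min { n : m(theta^{-n} omega) <= n }, with value infinity if no such n exists.
   Tinv plays the role of theta^{-1}. *)
definition first_time :: "('a \<Rightarrow> nat) \<Rightarrow> ('a \<Rightarrow> 'a) \<Rightarrow> 'a \<Rightarrow> enat" where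
  "first_time m Tinv \<omega> =
     (if \<exists>n. m ((Tinv ^^ n) \<omega>) \<le> n
      then enat (LEAST n. m ((Tinv ^^ n) \<omega>) \<le> n)
      else \<infinity>)"

end

theory Submission
  imports Defs
begin

lemma funpow_meas:
  assumes "f \<in> measurable M M" shows "(f ^^ n) \<in> measurable M M"
  proof (induction n)
  case 0 then show ?case by (simp add: measurable_ident)
next
  case (Suc n) then show ?case using measurable_comp[OF Suc assms] by (simp add: comp_def)
qed

lemma funpow_distr:
  assumes "f \<in> measurable M M" "distr M M f = M" shows "distr M M (f ^^ n) = M"
proof (induction n)
  case 0 then show ?case by (simp add: distr_id2 id_def)
next
  case (Suc n)
  have "distr M M (f ^^ Suc n) = distr M M (f \<circ> (f ^^ n))" by simp
  also have "\<dots> = distr (distr M M (f ^^ n)) M f"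
    using distr_distr[OF assms(1) funpow_meas[OF assms(1)]] by simp
  also have "\<dots> = M" using Suc assms(2) by simp
  finally show ?case .
qed

theorem lemma5p2:
  fixes M :: "'a measure" and T Tinv :: "'a \<Rightarrow> 'a" and m :: "'a \<Rightarrow> nat" and k :: nat
  assumes "prob_space M"
    and "T \<in> measurable M M" and "distr M M T = M"
    and "Tinv \<in> measurable M M" and "distr M M Tinv = M"
    and "\<And>\<omega>. \<omega> \<in> space M \<Longrightarrow> Tinv (T \<omega>) = \<omega>"
    and "\<And>\<omega>. \<omega> \<in> space M \<Longrightarrow> T (Tinv \<omega>) = \<omega>"
    and "m \<in> measurable M (count_space UNIV)"
    and "\<And>\<omega>. \<omega> \<in> space M \<Longrightarrow> m \<omega> > 0"
  shows "measure M {\<omega> \<in> space M. first_time m Tinv \<omega> > enat k}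
         \<le> measure M {\<omega> \<in> space M. m \<omega> > k}"
proof -
  interpret prob_space M by fact
  define F where "F = Tinv ^^ k"
  have Fm: "F \<in> measurable M M" unfolding F_def by (rule funpow_meas[OF assms(4)])
  have Fd: "distr M M F = M" unfolding F_def by (rule funpow_distr[OF assms(4,5)])
  define A where "A = {\<omega> \<in> space M. m \<omega> > k}"
  have A: "A \<in> sets M" proof -
    have "m -` {k<..} \<inter> space M \<in> sets M" using measurable_sets[OF assms(8)] by simp
    moreover have "A = m -` {k<..} \<inter> space M" unfolding A_def by auto
    ultimately show ?thesis by simp
  qed
  have "measure M A = measure (distr M M F) A" using arg_cong[where f="\<lambda>X. measure X A", OF Fd] by (rule sym)
  also have "\<dots> = measure M (F -` A \<inter> space M)" using measure_distr[OF Fm A] .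
  finally have eq: "measure M A = measure M (F -` A \<inter> space M)" .
  have sub: "{\<omega> \<in> space M. first_time m Tinv \<omega> > enat k} \<subseteq> F -` A \<inter> space M"
  proof
    fix \<omega> assume w: "\<omega> \<in> {\<omega> \<in> space M. first_time m Tinv \<omega> > enat k}"
    have "m (F \<omega>) > k"
    proof (rule ccontr)
      assume "\<not> m (F \<omega>) > k"
      then have h: "m ((Tinv ^^ k) \<omega>) \<le> k" by (simp add: F_def)
      then have "(LEAST n. m ((Tinv ^^ n) \<omega>) \<le> n) \<le> k" by (rule Least_le)
      then show False using w h unfolding first_time_def by (auto split: if_splits)
    qed
    moreover have "F \<omega> \<in> space M" using measurable_space[OF Fm] w by simp
    ultimately show "\<omega> \<in> F -` A \<inter> space M" using w unfolding A_def by simp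
  qed
  have "measure M {\<omega> \<in> space M. first_time m Tinv \<omega> > enat k} \<le> measure M (F -` A \<inter> space M)"
    using finite_measure_mono[OF sub measurable_sets[OF Fm A]] .
  then show ?thesis using eq unfolding A_def by linarith
qed

end
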